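(* Let $1\le m\le N-1$ be integers, let $A\subset\Lambda$ be a measurable set of positive measure, and let $\gamma:A\to(0,\infty)$ be measurable. Suppose that $$P(x_1,\dots,x_N)\ge\gamma(x_N)\,\rho^{(N-1)}(x_1,\dots,x_{N-1})$$ for a.e. $(x_1,\dots,x_N)\in\Lambda^{N-1}\times A$. Then $$P(x_1,\dots,x_N)\ge\gamma(x_N)\gamma(x_{N-1})\cdots\gamma(x_{m+1})\,\rho^{(m)}(x_1,\dots,x_m)$$ for a.e. $(x_1,\dots,x_N)\in\Lambda^m\times A^{N-m}$.
   Context: $(\Lambda;dx)$ is a complete $\sigma$-finite measure space with non-zero measure $dx$; $d^kx$ denotes the completion of $dx^{\otimes k}$ on $\Lambda^k$, and "a.e." refers to these measures. $N\ge2$ and $P$ is a symmetric probability density on $\Lambda^N$: a nonnegative, measurable, symmetric function with $\int_{\Lambda^N}P\,d^Nx=1$. For $1\le m<N$, the marginal density is $\rho^{(m)}(x_1,\dots,x_m):=\int_{\Lambda^{N-m}}P(x_1,\dots,x_N)\,dx_{m+1}\cdots dx_N$ (defined a.e. on $\Lambda^m$). *)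

theory Defs
  imports "HOL-Analysis.Analysis"
begin

text \<open>Lambda^k is modelled as the product space PiM I (\<lambda>_. M) over an index set I of
  size k (coordinates x_1..x_N are x 0 .. x (N-1)); d^k x is its completion.\<close>

definition cprod :: "'a measure \<Rightarrow> nat set \<Rightarrow> (nat \<Rightarrow> 'a) measure" where
  "cprod M I = completion (PiM I (\<lambda>_. M))"

text \<open>Marginal density rho^(m)(x_1,...,x_m) = integral of P over x_{m+1},...,x_N
  (only the coordinates x 0 .. x (m-1) of the argument are used).\<close>

definition marginal :: "'a measure \<Rightarrow> nat \<Rightarrow> ((nat \<Rightarrow> 'a) \<Rightarrow> real) \<Rightarrow> nat \<Rightarrow> (nat \<Rightarrow> 'a) \<Rightarrow> ennreal" where
  "marginal M N P m x =
     (\<integral>\<^sup>+ y. ennreal (P (merge {..<m} {m..<N} (x, y))) \<partial>(cprod M {m..<N}))"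

definition sym_prob_density :: "'a measure \<Rightarrow> nat \<Rightarrow> ((nat \<Rightarrow> 'a) \<Rightarrow> real) \<Rightarrow> bool" where
  "sym_prob_density M N P \<longleftrightarrow>
     P \<in> borel_measurable (cprod M {..<N}) \<and>
     (\<forall>x\<in>space (cprod M {..<N}). 0 \<le> P x) \<and>
     (\<forall>x\<in>space (cprod M {..<N}). \<forall>\<sigma>. \<sigma> permutes {..<N} \<longrightarrow> P (x \<circ> \<sigma>) = P x) \<and>
     (\<integral>\<^sup>+ x. ennreal (P x) \<partial>(cprod M {..<N})) = 1"

end

theory Submission
  imports Defs
begin


lemma measurable_perm:
  assumes "\<sigma> permutes I"
  shows "(\<lambda>x. x \<circ> \<sigma>) \<in> measurable (PiM I (\<lambda>_. M)) (PiM I (\<lambda>_. M))"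
proof -
  have "(\<lambda>x i. x (\<sigma> i)) \<in> measurable (PiM I (\<lambda>_. M)) (PiM I (\<lambda>_. M))"
  proof (rule measurable_PiM_single')
    fix i assume "i \<in> I"
    then have "\<sigma> i \<in> I" using assms by (simp add: permutes_in_image)
    then show "(\<lambda>x. x (\<sigma> i)) \<in> measurable (PiM I (\<lambda>_. M)) M" by measurable
  next
    show "(\<lambda>x i. x (\<sigma> i)) \<in> space (PiM I (\<lambda>_. M)) \<rightarrow> (\<Pi>\<^sub>E i\<in>I. space M)"
      using assms by (auto simp: space_PiM PiE_iff permutes_in_image extensional_def permutes_not_in)
  qed
  then show ?thesis by (simp add: comp_def)
qed

lemma distr_perm:
  assumes M: "sigma_finite_measure M" and I: "finite I" and s: "\<sigma> permutes I"
  shows "distr (PiM I (\<lambda>_. M)) (PiM I (\<lambda>_. M)) (\<lambda>x. x \<circ> \<sigma>) = PiM I (\<lambda>_. M)"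
proof -
  interpret product_sigma_finite "\<lambda>_. M" by (simp add: product_sigma_finite_def M)
  show ?thesis
  proof (rule PiM_eqI[OF I])
    fix A assume A: "\<And>i. i \<in> I \<Longrightarrow> A i \<in> sets M"
    have si: "inv \<sigma> permutes I" using s by (rule permutes_inv)
    have eq: "(\<lambda>x. x \<circ> \<sigma>) -` Pi\<^sub>E I A \<inter> space (PiM I (\<lambda>_. M)) = Pi\<^sub>E I (\<lambda>j. A (inv \<sigma> j))"
    proof (intro set_eqI iffI)
      fix x assume x: "x \<in> (\<lambda>x. x \<circ> \<sigma>) -` Pi\<^sub>E I A \<inter> space (PiM I (\<lambda>_. M))"
      show "x \<in> Pi\<^sub>E I (\<lambda>j. A (inv \<sigma> j))"
      proof (unfold PiE_iff, intro conjI ballI)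
        fix j assume j: "j \<in> I"
        then have "inv \<sigma> j \<in> I" using si by (simp add: permutes_in_image)
        then have "(x \<circ> \<sigma>) (inv \<sigma> j) \<in> A (inv \<sigma> j)" using x by (auto simp: PiE_iff)
        then show "x j \<in> A (inv \<sigma> j)" using permutes_inverses(1)[OF s] by simp
      next
        show "x \<in> extensional I" using x by (auto simp: space_PiM PiE_iff)
      qed
    next
      fix x assume x: "x \<in> Pi\<^sub>E I (\<lambda>j. A (inv \<sigma> j))"
      have "x \<circ> \<sigma> \<in> Pi\<^sub>E I A"
      proof (unfold PiE_iff, intro conjI ballI)
        fix i assume i: "i \<in> I"
        then have "\<sigma> i \<in> I" using s by (simp add: permutes_in_image)
        then show "(x \<circ> \<sigma>) i \<in> A i" using x permutes_inverses(2)[OF s] by (auto simp: PiE_iff)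
      next
        show "x \<circ> \<sigma> \<in> extensional I" using x s
          by (auto simp: PiE_iff extensional_def permutes_not_in)
      qed
      moreover have "x \<in> space (PiM I (\<lambda>_. M))"
      proof -
        { fix j assume j: "j \<in> I"
          then have "inv \<sigma> j \<in> I" using si by (simp add: permutes_in_image)
          then have "x j \<in> space M" using x j A[THEN sets.sets_into_space] by (auto simp: PiE_iff) }
        then show ?thesis using x by (auto simp: space_PiM PiE_iff)
      qed
      ultimately show "x \<in> (\<lambda>x. x \<circ> \<sigma>) -` Pi\<^sub>E I A \<inter> space (PiM I (\<lambda>_. M))" by simp
    qed
    have "emeasure (distr (PiM I (\<lambda>_. M)) (PiM I (\<lambda>_. M)) (\<lambda>x. x \<circ> \<sigma>)) (Pi\<^sub>E I A)
        = emeasure (PiM I (\<lambda>_. M)) (Pi\<^sub>E I (\<lambda>j. A (inv \<sigma> j)))"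
      using A by (subst emeasure_distr[OF measurable_perm[OF s]]) (auto simp: eq intro!: sets_PiM_I_finite I)
    also have "\<dots> = (\<Prod>j\<in>I. emeasure M (A (inv \<sigma> j)))"
      using A si I by (subst emeasure_PiM) (auto simp: permutes_in_image)
    also have "\<dots> = (\<Prod>i\<in>I. emeasure M (A i))"
      using prod.permute[OF si, of "\<lambda>i. emeasure M (A i)"] by (simp add: comp_def)
    finally show "emeasure (distr (PiM I (\<lambda>_. M)) (PiM I (\<lambda>_. M)) (\<lambda>x. x \<circ> \<sigma>)) (Pi\<^sub>E I A) = (\<Prod>i\<in>I. emeasure M (A i))" .
  qed simp
qed


lemma AE_perm:
  assumes M: "sigma_finite_measure M" and I: "finite I" and s: "\<sigma> permutes I"
    and Q: "AE x in PiM I (\<lambda>_. M). Q x"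
  shows "AE x in PiM I (\<lambda>_. M). Q (x \<circ> \<sigma>)"
proof -
  have "AE x in distr (PiM I (\<lambda>_. M)) (PiM I (\<lambda>_. M)) (\<lambda>x. x \<circ> \<sigma>). Q x"
    using Q by (subst distr_perm[OF M I s])
  then show ?thesis by (rule AE_distrD[OF measurable_perm[OF s]])
qed

lemma AE_merge:
  assumes M: "sigma_finite_measure M" and IJ: "I \<inter> J = {}" "finite I" "finite J"
    and Q: "AE z in PiM (I \<union> J) (\<lambda>_. M). Q z"
  shows "AE x in PiM I (\<lambda>_. M). AE y in PiM J (\<lambda>_. M). Q (merge I J (x, y))"
proof -
  interpret product_sigma_finite "\<lambda>_. M" by (simp add: product_sigma_finite_def M)
  interpret I: finite_product_sigma_finite "\<lambda>_. M" I by standard (simp add: IJ)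
  interpret J: finite_product_sigma_finite "\<lambda>_. M" J by standard (simp add: IJ)
  interpret P: pair_sigma_finite "PiM I (\<lambda>_. M)" "PiM J (\<lambda>_. M)" by standard
  have "AE z in distr (PiM I (\<lambda>_. M) \<Otimes>\<^sub>M PiM J (\<lambda>_. M)) (PiM (I \<union> J) (\<lambda>_. M)) (merge I J). Q z"
    using Q by (subst distr_merge[OF IJ])
  then have "AE p in PiM I (\<lambda>_. M) \<Otimes>\<^sub>M PiM J (\<lambda>_. M). Q (merge I J p)"
    by (rule AE_distrD[OF measurable_merge])
  then show ?thesis by (rule P.AE_pair)
qed

lemma AE_restrict:
  assumes M: "sigma_finite_measure M" and K: "finite K" and JK: "J \<subseteq> K"
    and Q: "AE x in PiM J (\<lambda>_. M). Q x"
  shows "AE x in PiM K (\<lambda>_. M). Q (restrict x J)"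
proof -
  interpret product_sigma_finite "\<lambda>_. M" by (simp add: product_sigma_finite_def M)
  have fin: "finite J" "finite (K - J)" using K JK finite_subset by auto
  interpret I: finite_product_sigma_finite "\<lambda>_. M" J by standard (simp add: fin)
  interpret J: finite_product_sigma_finite "\<lambda>_. M" "K - J" by standard (simp add: fin)
  interpret P: pair_sigma_finite "PiM J (\<lambda>_. M)" "PiM (K - J) (\<lambda>_. M)" by standard
  from Q obtain N0 where N0: "{x \<in> space (PiM J (\<lambda>_. M)). \<not> Q x} \<subseteq> N0" "N0 \<in> null_sets (PiM J (\<lambda>_. M))"
    by (auto simp: eventually_ae_filter)
  have KJ: "J \<union> (K - J) = K" using JK by auto
  have meas: "{x \<in> space (PiM K (\<lambda>_. M)). restrict x J \<notin> N0} \<in> sets (PiM K (\<lambda>_. M))"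
  proof -
    have "{x \<in> space (PiM K (\<lambda>_. M)). restrict x J \<notin> N0} = space (PiM K (\<lambda>_. M)) - ((\<lambda>x. restrict x J) -` N0 \<inter> space (PiM K (\<lambda>_. M)))"
      by auto
    also have "\<dots> \<in> sets (PiM K (\<lambda>_. M))"
      using N0(2) measurable_restrict_subset[OF JK, of "\<lambda>_. M"] by (intro sets.compl_sets measurable_sets) auto
    finally show ?thesis .
  qed
  have "AE x in PiM J (\<lambda>_. M). AE y in PiM (K - J) (\<lambda>_. M). fst (x, y) \<notin> N0"
    using AE_not_in[OF N0(2)] by (auto elim!: eventually_mono)
  then have "AE p in PiM J (\<lambda>_. M) \<Otimes>\<^sub>M PiM (K - J) (\<lambda>_. M). fst p \<notin> N0"
    using N0(2) by (intro P.AE_pair_measure) (auto intro: measurable_sets[OF measurable_fst] simp del: sets_pair_measure)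
  then have "AE p in PiM J (\<lambda>_. M) \<Otimes>\<^sub>M PiM (K - J) (\<lambda>_. M). restrict (merge J (K - J) p) J \<notin> N0"
    by (rule AE_mp[OF _ AE_I2]) (auto simp: space_pair_measure space_PiM)
  moreover have dj: "J \<inter> (K - J) = {}" by auto
  note mm = measurable_merge[of J "K - J" "\<lambda>_. M", unfolded KJ]
  ultimately have "AE x in distr (PiM J (\<lambda>_. M) \<Otimes>\<^sub>M PiM (K - J) (\<lambda>_. M)) (PiM K (\<lambda>_. M)) (merge J (K - J)). restrict x J \<notin> N0"
    using meas by (subst AE_distr_iff[OF mm]) auto
  then have "AE x in PiM K (\<lambda>_. M). restrict x J \<notin> N0"
    by (simp only: distr_merge[OF dj fin, unfolded KJ])
  then show ?thesis
  proof (rule AE_mp[OF _ AE_I2], intro impI)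
    fix x assume "x \<in> space (PiM K (\<lambda>_. M))" "restrict x J \<notin> N0"
    moreover have "restrict x J \<in> space (PiM J (\<lambda>_. M))"
      using measurable_space[OF measurable_restrict_subset[OF JK]] calculation(1) by blast
    ultimately show "Q (restrict x J)" using N0(1) by auto
  qed
qed

lemma meas_merge_const:
  assumes u: "\<And>i. i \<in> I \<Longrightarrow> u i \<in> space M"
  shows "(\<lambda>v. merge I J (u, v)) \<in> measurable (PiM J (\<lambda>_. M)) (PiM (I \<union> J) (\<lambda>_. M))"
proof -
  have "(\<lambda>v i. if i \<in> I then u i else if i \<in> J then v i else undefined) \<in> measurable (PiM J (\<lambda>_. M)) (PiM (I \<union> J) (\<lambda>_. M))"
  proof (rule measurable_PiM_single')
    fix i assume "i \<in> I \<union> J"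
    then show "(\<lambda>v. if i \<in> I then u i else if i \<in> J then v i else undefined) \<in> measurable (PiM J (\<lambda>_. M)) M"
      using u by (cases "i \<in> I") auto
  next
    show "(\<lambda>v i. if i \<in> I then u i else if i \<in> J then v i else undefined) \<in> space (PiM J (\<lambda>_. M)) \<rightarrow> (\<Pi>\<^sub>E i\<in>I \<union> J. space M)"
      using u by (auto simp: space_PiM PiE_iff extensional_def split: if_splits)
  qed
  then show ?thesis by (simp add: merge_def)
qed



lemma chain_aux:
  fixes r c :: "nat \<Rightarrow> ennreal" and F :: ennreal
  assumes mn: "m \<le> n" and base: "c n * r n \<le> F"
    and step: "\<And>k. m \<le> k \<Longrightarrow> k < n \<Longrightarrow> c k * r k \<le> r (Suc k)"
  shows "(\<Prod>i\<in>{m..n}. c i) * r m \<le> F"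
  using mn
proof (induction rule: inc_induct)
  case base
  then show ?case using assms(2) by simp
next
  case (step k)
  have "(\<Prod>i\<in>{k..n}. c i) * r k = (\<Prod>i\<in>{Suc k..n}. c i) * (c k * r k)"
    using step.hyps by (simp add: prod.atLeast_Suc_atMost mult_ac)
  also have "\<dots> \<le> (\<Prod>i\<in>{Suc k..n}. c i) * r (Suc k)"
    using assms(3)[OF step.hyps] by (intro mult_left_mono) auto
  also have "\<dots> \<le> F" by (rule step.IH)
  finally show ?case .
qed

theorem lemma4:
  fixes M :: "'a measure" and N m :: nat and P :: "(nat \<Rightarrow> 'a) \<Rightarrow> real"
    and A :: "'a set" and \<gamma> :: "'a \<Rightarrow> real"
  assumes "complete_measure M" and "sigma_finite_measure M"
    and "emeasure M (space M) \<noteq> 0"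
    and "N \<ge> 2" and "sym_prob_density M N P"
    and "1 \<le> m" and "m \<le> N - 1"
    and "A \<in> sets M" and "emeasure M A > 0"
    and "\<gamma> \<in> borel_measurable (restrict_space M A)" and "\<forall>a\<in>A. \<gamma> a > 0"
    and "AE x in cprod M {..<N}. x (N - 1) \<in> A \<longrightarrow>
           ennreal (\<gamma> (x (N - 1))) * marginal M N P (N - 1) x \<le> ennreal (P x)"
  shows "AE x in cprod M {..<N}. (\<forall>i\<in>{m..<N}. x i \<in> A) \<longrightarrow>
           ennreal (\<Prod>i\<in>{m..<N}. \<gamma> (x i)) * marginal M N P m x \<le> ennreal (P x)"
proof -
  note sf = assms(2)
  define L where "L = PiM {..<N} (\<lambda>_::nat. M)"
  interpret PS: product_sigma_finite "\<lambda>_::nat. M" by (simp add: product_sigma_finite_def sf)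
  have Pmeas: "P \<in> borel_measurable (completion L)"
    and Psym: "\<And>x \<sigma>. x \<in> space L \<Longrightarrow> \<sigma> permutes {..<N} \<Longrightarrow> P (x \<circ> \<sigma>) = P x"
    using assms(5) by (auto simp: sym_prob_density_def cprod_def L_def)
  have "(\<lambda>x. ennreal (P x)) \<in> borel_measurable (completion L)"
    using Pmeas by measurable
  then obtain f' where f'm: "f' \<in> borel_measurable L" and f'P: "AE x in L. ennreal (P x) = f' x"
    using completion_ex_borel_measurable by blast
  define Sy where "Sy = {x \<in> space L. \<forall>\<sigma>\<in>{\<sigma>. \<sigma> permutes {..<N}}. f' (x \<circ> \<sigma>) = f' x}"
  define f where "f x = (if x \<in> Sy then f' x else 0)" for x
  have "Sy \<in> sets L"
    unfolding Sy_def
  proof (rule sets.sets_Collect_finite_All')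
    fix \<sigma> assume "\<sigma> \<in> {\<sigma>. \<sigma> permutes {..<N}}"
    then have s: "\<sigma> permutes {..<N}" by simp
    have "(\<lambda>x. f' (x \<circ> \<sigma>)) \<in> borel_measurable L"
      using measurable_compose[OF measurable_perm[OF s] f'm[unfolded L_def]] by (simp add: L_def)
    then show "{x \<in> space L. f' (x \<circ> \<sigma>) = f' x} \<in> sets L"
      using f'm by measurable
  qed (auto simp: finite_permutations intro: permutes_id)
  then have fmeas: "f \<in> borel_measurable L"
    unfolding f_def by (intro measurable_If_set f'm) auto
  have fsym: "f (x \<circ> \<tau>) = f x" if x: "x \<in> space L" and t: "\<tau> permutes {..<N}" for x \<tau>
  proof -
    have xt: "x \<circ> \<tau> \<in> space L"
      using measurable_space[OF measurable_perm[OF t]] x by (auto simp: L_def)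
    have "x \<circ> \<tau> \<in> Sy \<longleftrightarrow> x \<in> Sy"
    proof
      assume "x \<in> Sy"
      then show "x \<circ> \<tau> \<in> Sy" using xt t unfolding Sy_def
        by (auto simp: o_assoc[symmetric] permutes_compose)
    next
      assume a: "x \<circ> \<tau> \<in> Sy"
      have ti: "inv \<tau> permutes {..<N}" using t by (rule permutes_inv)
      have "(x \<circ> \<tau>) \<circ> inv \<tau> = x" using permutes_inv_o(1)[OF t] by (simp add: o_assoc[symmetric])
      moreover have "\<forall>\<sigma>\<in>{\<sigma>. \<sigma> permutes {..<N}}. f' ((x \<circ> \<tau>) \<circ> \<sigma>) = f' (x \<circ> \<tau>)"
        using a unfolding Sy_def by auto
      ultimately show "x \<in> Sy" using x ti unfolding Sy_def
        by (auto simp: o_assoc permutes_compose) (metis o_assoc permutes_compose)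
    qed
    moreover have "x \<in> Sy \<Longrightarrow> f' (x \<circ> \<tau>) = f' x" using t unfolding Sy_def by auto
    ultimately show ?thesis unfolding f_def by auto
  qed
  have fP: "AE x in L. f x = ennreal (P x)"
  proof -
    have "\<forall>\<sigma>\<in>{\<sigma>. \<sigma> permutes {..<N}}. AE x in L. ennreal (P (x \<circ> \<sigma>)) = f' (x \<circ> \<sigma>)"
    proof
      fix \<sigma> assume "\<sigma> \<in> {\<sigma>. \<sigma> permutes {..<N}}"
      then have s: "\<sigma> permutes {..<N}" by simp
      show "AE x in L. ennreal (P (x \<circ> \<sigma>)) = f' (x \<circ> \<sigma>)"
        using AE_perm[OF sf finite_lessThan s f'P[unfolded L_def]] unfolding L_def by assumption
    qed
    then have "AE x in L. \<forall>\<sigma>\<in>{\<sigma>. \<sigma> permutes {..<N}}. ennreal (P (x \<circ> \<sigma>)) = f' (x \<circ> \<sigma>)"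
      by (subst AE_finite_all) (auto simp: finite_permutations)
    then show ?thesis
    proof (rule AE_mp[OF _ AE_I2], intro impI)
      fix x assume x: "x \<in> space L" and h: "\<forall>\<sigma>\<in>{\<sigma>. \<sigma> permutes {..<N}}. ennreal (P (x \<circ> \<sigma>)) = f' (x \<circ> \<sigma>)"
      have hid: "ennreal (P x) = f' x" using h[rule_format, of id] by (simp add: permutes_id)
      have "x \<in> Sy" unfolding Sy_def using x h Psym[OF x] hid by auto
      then show "f x = ennreal (P x)" using hid by (simp add: f_def)
    qed
  qed
  define \<rho> where "\<rho> k x = (\<integral>\<^sup>+ y. f (merge {..<k} {k..<N} (x, y)) \<partial>PiM {k..<N} (\<lambda>_::nat. M))" for k x
  have F1: "AE x in L. marginal M N P k x = \<rho> k x" if k: "k \<le> N" for k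
  proof -
    have U: "{..<N} = {..<k} \<union> {k..<N}" using k by auto
    have "AE z in PiM ({..<k} \<union> {k..<N}) (\<lambda>_. M). ennreal (P z) = f z"
      using fP unfolding L_def U[symmetric] by (auto elim: eventually_mono)
    then have "AE u in PiM {..<k} (\<lambda>_. M). AE y in PiM {k..<N} (\<lambda>_. M).
        ennreal (P (merge {..<k} {k..<N} (u, y))) = f (merge {..<k} {k..<N} (u, y))"
      by (intro AE_merge[OF sf]) auto
    moreover have "{..<k} \<subseteq> {..<N}" using k by auto
    ultimately have "AE x in PiM {..<N} (\<lambda>_. M). AE y in PiM {k..<N} (\<lambda>_. M).
        ennreal (P (merge {..<k} {k..<N} (restrict x {..<k}, y))) = f (merge {..<k} {k..<N} (restrict x {..<k}, y))"
      using AE_restrict[OF sf finite_lessThan] by blast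
    then show ?thesis unfolding L_def
    proof (rule eventually_mono)
      fix x assume "AE y in PiM {k..<N} (\<lambda>_. M).
        ennreal (P (merge {..<k} {k..<N} (restrict x {..<k}, y))) = f (merge {..<k} {k..<N} (restrict x {..<k}, y))"
      then have "AE y in completion (PiM {k..<N} (\<lambda>_. M)).
        ennreal (P (merge {..<k} {k..<N} (x, y))) = f (merge {..<k} {k..<N} (x, y))"
        by (intro AE_completion) simp
      then have "marginal M N P k x = (\<integral>\<^sup>+ y. f (merge {..<k} {k..<N} (x, y)) \<partial>completion (PiM {k..<N} (\<lambda>_. M)))"
        unfolding marginal_def cprod_def by (rule nn_integral_cong_AE)
      also have "\<dots> = \<rho> k x" unfolding \<rho>_def by (rule nn_integral_completion)
      finally show "marginal M N P k x = \<rho> k x" .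
    qed
  qed
  have F2: "AE x in L. x (N - 1) \<in> A \<longrightarrow> ennreal (\<gamma> (x (N - 1))) * \<rho> (N - 1) x \<le> f x"
    using assms(12)[unfolded cprod_def AE_completion_iff L_def[symmetric]] F1[OF diff_le_self[of N 1]] fP
    by eventually_elim auto
  have core: "AE x in L. x k \<in> A \<longrightarrow> ennreal (\<gamma> (x k)) * \<rho> k x \<le> \<rho> (Suc k) x"
    if k: "k < N - 1" for k
  proof -
    define n where "n = N - 1"
    define \<sigma> where "\<sigma> = Transposition.transpose k n"
    have kn: "k < n" "n < N" using k assms(4) by (auto simp: n_def)
    have nN: "{n..<N} = {n}" using kn by (auto simp: n_def)
    have sp: "\<sigma> permutes {..<N}" unfolding \<sigma>_def using kn by (intro permutes_swap_id) auto
    have "AE x in PiM {..<N} (\<lambda>_. M). (x \<circ> \<sigma>) n \<in> A \<longrightarrow> ennreal (\<gamma> ((x \<circ> \<sigma>) n)) * \<rho> n (x \<circ> \<sigma>) \<le> f (x \<circ> \<sigma>)"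
      using AE_perm[OF sf finite_lessThan sp F2[unfolded L_def]] unfolding n_def by simp
    then have H: "AE x in L. x k \<in> A \<longrightarrow> ennreal (\<gamma> (x k)) * \<rho> n (x \<circ> \<sigma>) \<le> f x"
      unfolding L_def[symmetric]
      by (rule AE_mp[OF _ AE_I2]) (auto simp: \<sigma>_def fsym[OF _ sp[unfolded \<sigma>_def]])
    have U: "{..<N} = {..<Suc k} \<union> {Suc k..<N}" using kn by auto
    have "AE z in PiM ({..<Suc k} \<union> {Suc k..<N}) (\<lambda>_. M). z k \<in> A \<longrightarrow> ennreal (\<gamma> (z k)) * \<rho> n (z \<circ> \<sigma>) \<le> f z"
      using H unfolding L_def U[symmetric] .
    moreover have dj: "{..<Suc k} \<inter> {Suc k..<N} = {}" by auto
    ultimately have "AE u in PiM {..<Suc k} (\<lambda>_. M). AE y in PiM {Suc k..<N} (\<lambda>_. M).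
        merge {..<Suc k} {Suc k..<N} (u, y) k \<in> A \<longrightarrow>
        ennreal (\<gamma> (merge {..<Suc k} {Suc k..<N} (u, y) k)) * \<rho> n (merge {..<Suc k} {Suc k..<N} (u, y) \<circ> \<sigma>)
          \<le> f (merge {..<Suc k} {Suc k..<N} (u, y))"
      using AE_merge[OF sf dj finite_lessThan finite_atLeastLessThan] by blast
    then have "AE u in PiM {..<Suc k} (\<lambda>_. M). AE y in PiM {Suc k..<N} (\<lambda>_. M).
        merge {..<Suc k} {Suc k..<N} (u, y) k \<in> A \<longrightarrow>
        ennreal (\<gamma> (merge {..<Suc k} {Suc k..<N} (u, y) k)) * \<rho> n (merge {..<Suc k} {Suc k..<N} (u, y) \<circ> \<sigma>)
          \<le> f (merge {..<Suc k} {Suc k..<N} (u, y))"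
      by this
    moreover have "{..<Suc k} \<subseteq> {..<N}" using kn by auto
    ultimately have "AE x in PiM {..<N} (\<lambda>_. M). (\<lambda>u. AE y in PiM {Suc k..<N} (\<lambda>_. M).
        merge {..<Suc k} {Suc k..<N} (u, y) k \<in> A \<longrightarrow>
        ennreal (\<gamma> (merge {..<Suc k} {Suc k..<N} (u, y) k)) * \<rho> n (merge {..<Suc k} {Suc k..<N} (u, y) \<circ> \<sigma>)
          \<le> f (merge {..<Suc k} {Suc k..<N} (u, y))) (restrict x {..<Suc k})"
      using AE_restrict[OF sf finite_lessThan] by blast
    then show ?thesis unfolding L_def
    proof (rule AE_mp[OF _ AE_I2], intro impI)
      fix x assume x: "x \<in> space (PiM {..<N} (\<lambda>_. M))" and xk: "x k \<in> A"
      define u where "u = restrict x {..<Suc k}"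
      assume "(\<lambda>u. AE y in PiM {Suc k..<N} (\<lambda>_. M).
        merge {..<Suc k} {Suc k..<N} (u, y) k \<in> A \<longrightarrow>
        ennreal (\<gamma> (merge {..<Suc k} {Suc k..<N} (u, y) k)) * \<rho> n (merge {..<Suc k} {Suc k..<N} (u, y) \<circ> \<sigma>)
          \<le> f (merge {..<Suc k} {Suc k..<N} (u, y))) (restrict x {..<Suc k})"
      then have Hu: "AE y in PiM {Suc k..<N} (\<lambda>_. M).
        ennreal (\<gamma> (x k)) * \<rho> n (merge {..<Suc k} {Suc k..<N} (u, y) \<circ> \<sigma>)
          \<le> f (merge {..<Suc k} {Suc k..<N} (u, y))"
        using xk unfolding u_def by (auto simp: merge_def)
      have uspace: "u i \<in> space M" if "i < Suc k" for i
        using x that kn unfolding u_def by (auto simp: space_PiM PiE_iff)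
      define g where "g v = f (merge {..<k} {k..<N} (u, v))" for v
      have fmeas': "f \<in> borel_measurable (PiM ({..<k} \<union> {k..<N}) (\<lambda>_. M))"
        using fmeas kn unfolding L_def by (simp add: ivl_disj_un_one)
      have gmeas: "g \<in> borel_measurable (PiM {k..<N} (\<lambda>_. M))"
        unfolding g_def
        by (rule measurable_compose[OF meas_merge_const fmeas']) (use uspace in auto)
      have ins: "insert k {Suc k..<N} = {k..<N}" using kn by auto
      have gmeas2: "(\<lambda>t. g (y(k := t))) \<in> borel_measurable M" if y: "y \<in> space (PiM {Suc k..<N} (\<lambda>_. M))" for y
        using measurable_compose[OF measurable_component_update[OF y, of k] gmeas[folded ins]] by simp
      have key: "\<rho> n (merge {..<Suc k} {Suc k..<N} (u, y) \<circ> \<sigma>) = (\<integral>\<^sup>+ t. g (y(k := t)) \<partial>M)"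
        if y: "y \<in> space (PiM {Suc k..<N} (\<lambda>_. M))" for y
      proof -
        have "\<rho> n (merge {..<Suc k} {Suc k..<N} (u, y) \<circ> \<sigma>) = (\<integral>\<^sup>+ z. g (y(k := z n)) \<partial>PiM {n} (\<lambda>_. M))"
          unfolding \<rho>_def nN
        proof (rule nn_integral_cong)
          fix z assume z: "z \<in> space (PiM {n} (\<lambda>_. M))"
          define p where "p = merge {..<n} {n} (merge {..<Suc k} {Suc k..<N} (u, y) \<circ> \<sigma>, z)"
          have pspace: "p \<in> space L"
            using z y uspace kn unfolding p_def L_def
            by (auto simp: space_PiM PiE_iff merge_def \<sigma>_def Transposition.transpose_def extensional_def n_def)
          have "p \<circ> \<sigma> = merge {..<k} {k..<N} (u, y(k := z n))"
            using kn unfolding p_def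
            by (auto simp: fun_eq_iff merge_def \<sigma>_def Transposition.transpose_def n_def)
          then show "f p = g (y(k := z n))"
            using fsym[OF pspace sp] unfolding g_def by simp
        qed
        also have "\<dots> = (\<integral>\<^sup>+ t. g (y(k := t)) \<partial>M)"
          by (rule PS.product_nn_integral_singleton[OF gmeas2[OF y]])
        finally show ?thesis .
      qed
      have "ennreal (\<gamma> (x k)) * \<rho> k u = ennreal (\<gamma> (x k)) * integral\<^sup>N (PiM {k..<N} (\<lambda>_. M)) g"
        unfolding \<rho>_def g_def ..
      also have "\<dots> = (\<integral>\<^sup>+ v. ennreal (\<gamma> (x k)) * g v \<partial>PiM {k..<N} (\<lambda>_. M))"
        by (rule nn_integral_cmult[symmetric, OF gmeas])
      also have "\<dots> = (\<integral>\<^sup>+ y. (\<integral>\<^sup>+ t. ennreal (\<gamma> (x k)) * g (y(k := t)) \<partial>M) \<partial>PiM {Suc k..<N} (\<lambda>_. M))"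
        unfolding ins[symmetric]
        by (rule PS.product_nn_integral_insert) (use gmeas ins in auto)
      also have "\<dots> = (\<integral>\<^sup>+ y. ennreal (\<gamma> (x k)) * \<rho> n (merge {..<Suc k} {Suc k..<N} (u, y) \<circ> \<sigma>) \<partial>PiM {Suc k..<N} (\<lambda>_. M))"
        by (rule nn_integral_cong) (simp add: key nn_integral_cmult gmeas2)
      also have "\<dots> \<le> (\<integral>\<^sup>+ y. f (merge {..<Suc k} {Suc k..<N} (u, y)) \<partial>PiM {Suc k..<N} (\<lambda>_. M))"
        by (rule nn_integral_mono_AE[OF Hu])
      also have "\<dots> = \<rho> (Suc k) x" unfolding \<rho>_def u_def by simp
      finally have "ennreal (\<gamma> (x k)) * \<rho> k u \<le> \<rho> (Suc k) x" .
      moreover have "\<rho> k u = \<rho> k x"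
        unfolding \<rho>_def u_def by (rule nn_integral_cong) (auto simp: merge_def intro!: arg_cong[where f=f])
      ultimately show "ennreal (\<gamma> (x k)) * \<rho> k x \<le> \<rho> (Suc k) x" by simp
    qed
  qed
  have allcore: "AE x in L. \<forall>k\<in>{m..<N-1}. x k \<in> A \<longrightarrow> ennreal (\<gamma> (x k)) * \<rho> k x \<le> \<rho> (Suc k) x"
    by (rule AE_finite_allI) (auto intro: core)
  have "AE x in L. (\<forall>i\<in>{m..<N}. x i \<in> A) \<longrightarrow>
           ennreal (\<Prod>i\<in>{m..<N}. \<gamma> (x i)) * marginal M N P m x \<le> ennreal (P x)"
  proof -
  have mN: "m \<le> N" using assms(4,7) by auto
  show ?thesis
    using allcore F2 F1[OF mN] fP
  proof eventually_elim
    case (elim x)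
    show ?case
    proof
      assume xA: "\<forall>i\<in>{m..<N}. x i \<in> A"
      have ivl: "{m..<N} = {m..N-1}" using assms(4) by auto
      have "(\<Prod>i\<in>{m..N-1}. ennreal (\<gamma> (x i))) * \<rho> m x \<le> f x"
      proof (rule chain_aux)
        show "m \<le> N - 1" by fact
        show "ennreal (\<gamma> (x (N - 1))) * \<rho> (N - 1) x \<le> f x"
          using elim(2) xA assms(4,7) by auto
        fix k assume "m \<le> k" "k < N - 1"
        then show "ennreal (\<gamma> (x k)) * \<rho> k x \<le> \<rho> (Suc k) x"
          using elim(1) xA by auto
      qed
      moreover have "(\<Prod>i\<in>{m..N-1}. ennreal (\<gamma> (x i))) = ennreal (\<Prod>i\<in>{m..<N}. \<gamma> (x i))"
        unfolding ivl using xA assms(11) ivl by (intro prod_ennreal) (auto intro: less_imp_le)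
      ultimately show "ennreal (\<Prod>i\<in>{m..<N}. \<gamma> (x i)) * marginal M N P m x \<le> ennreal (P x)"
        using elim(3,4) by simp
    qed
  qed
  qed
  then show ?thesis unfolding cprod_def AE_completion_iff L_def .
qed

end
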